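(* Let $e_1,\dots,e_n$ be positive real numbers and let $J_n=\{(x_1,\dots,x_n)\in\mathbb{R}^n: 0\le x_1\le\cdots\le x_n\le1\}$. Then $$\int_{J_n}\det\bigl[x_j^{e_i-1}\bigr]_{1\le i,j\le n}\,dx_1\cdots dx_n=\frac1{e_1\cdots e_n}\prod_{1\le i<j\le n}\frac{e_j-e_i}{e_j+e_i}.$$ *)

theory Defs
  imports "HOL-Analysis.Analysis" "Jordan_Normal_Form.Determinant"
begin

definition J :: "nat \<Rightarrow> (nat \<Rightarrow> real) set" where
  "J n = {x \<in> PiE {..<n} (\<lambda>_. UNIV).
            (\<forall>i<n. 0 \<le> x i \<and> x i \<le> 1) \<and> (\<forall>i j. i \<le> j \<and> j < n \<longrightarrow> x i \<le> x j)}"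

end

theory Submission
  imports Defs "HOL-Computational_Algebra.Polynomial"
begin

lemma prod_lin_coeffs:
  fixes c :: "nat \<Rightarrow> real"
  assumes "finite A"
  shows "(\<forall>k>card A. poly.coeff (\<Prod>j\<in>A. [:c j, 1:]) k = 0) \<and>
         poly.coeff (\<Prod>j\<in>A. [:c j, 1:]) (card A) = 1 \<and>
         (A \<noteq> {} \<longrightarrow> poly.coeff (\<Prod>j\<in>A. [:c j, 1:]) (card A - 1) = (\<Sum>j\<in>A. c j))"
  using assms
proof (induction rule: finite_induct)
  case empty
  then show ?case by auto
next
  case (insert a A)
  define Q where "Q = (\<Prod>j\<in>A. [:c j, 1:])"
  have eq: "(\<Prod>j\<in>insert a A. [:c j, 1:]) = Polynomial.smult (c a) Q + pCons 0 Q"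
    using insert by (simp add: Q_def)
  have cf: "poly.coeff (\<Prod>j\<in>insert a A. [:c j, 1:]) k = c a * poly.coeff Q k + (if k = 0 then 0 else poly.coeff Q (k - 1))" for k
    unfolding eq by (cases k) auto
  have IH: "\<forall>k>card A. poly.coeff Q k = 0" "poly.coeff Q (card A) = 1"
     "A \<noteq> {} \<longrightarrow> poly.coeff Q (card A - 1) = (\<Sum>j\<in>A. c j)"
    using insert.IH by (auto simp: Q_def)
  have ci: "card (insert a A) = Suc (card A)" using insert by simp
  show ?case
  proof (intro conjI impI allI)
    fix k assume "k > card (insert a A)"
    then show "poly.coeff (\<Prod>j\<in>insert a A. [:c j, 1:]) k = 0"
      unfolding cf using IH ci by auto
  next
    show "poly.coeff (\<Prod>j\<in>insert a A. [:c j, 1:]) (card (insert a A)) = 1"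
      unfolding cf using IH ci by auto
  next
    show "poly.coeff (\<Prod>j\<in>insert a A. [:c j, 1:]) (card (insert a A) - 1) = (\<Sum>j\<in>insert a A. c j)"
    proof (cases "A = {}")
      case True
      then show ?thesis unfolding cf using IH ci by (simp add: Q_def)
    next
      case False
      then have "card A > 0" using insert by auto
      then show ?thesis unfolding cf using IH ci False insert by auto
    qed
  qed
qed

lemma lagrange_coeff:
  fixes e :: "nat \<Rightarrow> real" and p :: "real poly"
  assumes inj: "inj_on e {..<m}" and m: "m > 0" and deg: "degree p < m"
  shows "(\<Sum>k<m. poly p (e k) / (\<Prod>j\<in>{..<m}-{k}. (e k - e j))) = poly.coeff p (m - 1)"
proof -
  define L where "L k = (\<Prod>j\<in>{..<m}-{k}. [:- e j, 1:])" for k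
  define c where "c k = poly p (e k) / (\<Prod>j\<in>{..<m}-{k}. (e k - e j))" for k
  define q where "q = (\<Sum>k<m. Polynomial.smult (c k) (L k))"
  have cardL: "card ({..<m}-{k}) = m - 1" if "k < m" for k using that by simp
  have PL: "poly (L k) x = (\<Prod>j\<in>{..<m}-{k}. (x - e j))" for k x
    by (simp add: L_def poly_prod)
  have Lcoef: "(\<forall>i>m-1. poly.coeff (L k) i = 0) \<and> poly.coeff (L k) (m-1) = 1" if "k < m" for k
    using prod_lin_coeffs[of "{..<m}-{k}" "\<lambda>j. - e j"] cardL[OF that] by (simp add: L_def)
  have degL: "degree (L k) \<le> m - 1" if "k < m" for k
    using Lcoef[OF that] by (intro degree_le) auto
  have degq: "degree q \<le> m - 1"
    unfolding q_def by (intro degree_sum_le) (auto intro: order.trans[OF degree_smult_le] degL simp del: One_nat_def)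
  have nz: "(\<Prod>j\<in>{..<m}-{k}. (e k - e j)) \<noteq> 0" if "k < m" for k
    using inj that by (auto simp: inj_on_def)
  have Pq: "poly q (e i) = poly p (e i)" if "i < m" for i
  proof -
    have z: "poly (L k) (e i) = 0" if "k < m" "k \<noteq> i" for k
      unfolding PL using \<open>i < m\<close> that by (intro prod_zero) auto
    have "poly q (e i) = (\<Sum>k<m. c k * poly (L k) (e i))"
      by (simp add: q_def poly_sum)
    also have "\<dots> = c i * poly (L i) (e i)"
      using that z by (subst sum.remove[of _ i]) (auto intro!: sum.neutral)
    also have "\<dots> = poly p (e i)"
      unfolding c_def PL using nz[OF that] by simp
    finally show ?thesis .
  qed
  have cardA: "card (e ` {..<m}) = m" using inj by (simp add: card_image)
  have "p = q"
    by (rule poly_eqI_degree[of "e ` {..<m}"]) (use Pq[symmetric] cardA deg degq m in auto)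
  then have "poly.coeff p (m - 1) = (\<Sum>k<m. c k * poly.coeff (L k) (m - 1))"
    by (simp add: q_def coeff_sum)
  also have "\<dots> = (\<Sum>k<m. c k)"
    using Lcoef by (intro sum.cong) auto
  finally show ?thesis by (simp add: c_def)
qed

lemma lagrange_sum:
  fixes e :: "nat \<Rightarrow> real"
  assumes inj: "inj_on e {..<m}" and m: "m > 0"
  shows "(\<Sum>k<m. e k * (\<Prod>j\<in>{..<m}-{k}. (e k + e j) / (e k - e j))) = (\<Sum>k<m. e k)"
proof -
  define p where "p = (\<Prod>j<m. [:e j, 1:]) - (\<Prod>j<m. [:- e j, 1:])"
  have A: "(\<forall>k>m. poly.coeff (\<Prod>j<m. [:e j, 1:]) k = 0) \<and> poly.coeff (\<Prod>j<m. [:e j, 1:]) m = 1 \<and>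
      poly.coeff (\<Prod>j<m. [:e j, 1:]) (m - 1) = (\<Sum>j<m. e j)"
    using prod_lin_coeffs[of "{..<m}" e] m by auto
  have B: "(\<forall>k>m. poly.coeff (\<Prod>j<m. [:- e j, 1:]) k = 0) \<and> poly.coeff (\<Prod>j<m. [:- e j, 1:]) m = 1 \<and>
      poly.coeff (\<Prod>j<m. [:- e j, 1:]) (m - 1) = (\<Sum>j<m. - e j)"
    using prod_lin_coeffs[of "{..<m}" "\<lambda>j. - e j"] m by auto
  have "degree p \<le> m - 1"
  proof (rule degree_le, intro allI impI)
    fix i assume "m - 1 < i"
    then have "i = m \<or> i > m" using m by auto
    then show "poly.coeff p i = 0" using A B by (auto simp: p_def)
  qed
  then have deg: "degree p < m" using m by linarith
  have cp: "poly.coeff p (m - 1) = 2 * (\<Sum>k<m. e k)"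
    using A B by (simp add: p_def sum_negf)
  have pp: "poly p (e k) = 2 * e k * (\<Prod>j\<in>{..<m}-{k}. (e k + e j))" if "k < m" for k
  proof -
    have z: "(\<Prod>j<m. (e k - e j)) = 0" using that by (intro prod_zero) auto
    have r: "(\<Prod>j<m. (e k + e j)) = (e k + e k) * (\<Prod>j\<in>{..<m}-{k}. (e k + e j))"
      using that by (subst prod.remove[of _ k]) auto
    have "poly p (e k) = (\<Prod>j<m. (e k + e j)) - (\<Prod>j<m. (e k - e j))"
      unfolding p_def poly_diff poly_prod by (intro arg_cong2[where f="(-)"] prod.cong) auto
    then show ?thesis unfolding z r by simp
  qed
  have "2 * (\<Sum>k<m. e k) = (\<Sum>k<m. poly p (e k) / (\<Prod>j\<in>{..<m}-{k}. (e k - e j)))"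
    using lagrange_coeff[OF inj m deg] cp by simp
  also have "\<dots> = (\<Sum>k<m. 2 * (e k * (\<Prod>j\<in>{..<m}-{k}. (e k + e j) / (e k - e j))))"
    by (intro sum.cong refl) (simp add: pp prod_dividef)
  also have "\<dots> = 2 * (\<Sum>k<m. e k * (\<Prod>j\<in>{..<m}-{k}. (e k + e j) / (e k - e j)))"
    by (simp only: sum_distrib_left)
  finally show ?thesis by simp
qed

definition skip :: "nat \<Rightarrow> nat \<Rightarrow> nat" where "skip k i = (if i < k then i else Suc i)"
definition unskip :: "nat \<Rightarrow> nat \<Rightarrow> nat" where "unskip k i = (if i < k then i else i - 1)"

definition PP :: "nat \<Rightarrow> (nat \<Rightarrow> real) \<Rightarrow> real" where
  "PP n e = (1 / (\<Prod>i<n. e i)) * (\<Prod>(i, j) \<in> {(i, j). i < j \<and> j < n}. (e j - e i) / (e j + e i))"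

lemma fin_pairs: "finite {(i, j). i < j \<and> j < (m::nat)}"
  by (rule finite_subset[of _ "{..<m} \<times> {..<m}"]) auto

lemma PP_step:
  fixes e :: "nat \<Rightarrow> real" and k n :: nat
  assumes pos: "\<And>i. i < Suc n \<Longrightarrow> e i > 0" and inj: "inj_on e {..<Suc n}" and k: "k < Suc n"
  shows "(-1)^(k+n) * PP n (\<lambda>i. e (skip k i)) =
         PP (Suc n) e * (e k * (\<Prod>j\<in>{..<Suc n}-{k}. (e k + e j) / (e k - e j)))"
proof -
  define R where "R = (\<lambda>(i, j). (e j - e i) / (e j + e i))"
  define S where "S = {(i, j). i < j \<and> j < Suc n}"
  define NK where "NK = {(i, j). i < j \<and> j < Suc n \<and> i \<noteq> k \<and> j \<noteq> k}"
  define K where "K = {..<Suc n} - {k}"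
  define \<rho> where "\<rho> j = (e k - e j) / (e k + e j)" for j
  have a: "(\<Prod>i<n. e (skip k i)) = (\<Prod>i\<in>K. e i)"
    by (rule prod.reindex_bij_witness[where i="unskip k" and j="skip k"])
       (use k in \<open>auto simp: skip_def unskip_def K_def\<close>)
  have b: "(\<Prod>(i, j) \<in> {(i, j). i < j \<and> j < n}. (e (skip k j) - e (skip k i)) / (e (skip k j) + e (skip k i)))
      = prod R NK"
    by (rule prod.reindex_bij_witness[where i="\<lambda>(a,b). (unskip k a, unskip k b)" and j="\<lambda>(a,b). (skip k a, skip k b)"])
       (use k in \<open>auto simp: skip_def unskip_def NK_def R_def split: if_splits\<close>)
  have c: "prod R S = prod R NK * prod R (S - NK)"
    by (subst prod.subset_diff[of NK S]) (auto simp: S_def NK_def fin_pairs)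
  have d: "prod R (S - NK) = (\<Prod>j\<in>K. (if j < k then 1 else -1) * \<rho> j)"
    by (rule prod.reindex_bij_witness[where i="\<lambda>j. if j < k then (j, k) else (k, j)" and j="\<lambda>(a,b). if a = k then b else a"])
       (use k in \<open>auto simp: S_def NK_def K_def R_def \<rho>_def split: if_splits\<close>)
  have "(\<Prod>j\<in>K. (if j < k then 1 else -1 :: real)) = (\<Prod>j\<in>K \<inter> - {j. j < k}. -1)"
    by (subst prod.If_cases) (auto simp: K_def)
  also have "K \<inter> - {j. j < k} = {k<..n}" using k by (auto simp: K_def)
  finally have f: "(\<Prod>j\<in>K. (if j < k then 1 else -1 :: real)) = (-1)^(n-k)" by simp
  have g: "(\<Prod>i<Suc n. e i) = e k * (\<Prod>i\<in>K. e i)"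
    using k by (subst prod.remove[of _ k]) (auto simp: K_def)
  have \<rho>nz: "\<rho> j \<noteq> 0" if "j \<in> K" for j
  proof -
    have "e k > 0" "e j > 0" using that pos k by (auto simp: K_def)
    moreover have "e k \<noteq> e j" using that inj k by (auto simp: K_def inj_on_def)
    ultimately show ?thesis by (simp add: \<rho>_def)
  qed
  have ek: "e k > 0" using pos k by auto
  have Knz: "(\<Prod>i\<in>K. e i) \<noteq> 0" using pos by (auto simp: K_def) (metis less_irrefl)
  have PPn: "PP n (\<lambda>i. e (skip k i)) = (1 / (\<Prod>i\<in>K. e i)) * prod R NK"
    unfolding PP_def a b[symmetric] by (simp add: case_prod_beta)
  have PPS: "PP (Suc n) e = (1 / (e k * (\<Prod>i\<in>K. e i))) * (prod R NK * ((-1)^(n-k) * prod \<rho> K))"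
    unfolding PP_def g using c d f by (simp add: S_def R_def prod.distrib)
  have inv: "(\<Prod>j\<in>K. (e k + e j) / (e k - e j)) = 1 / prod \<rho> K"
    by (simp add: \<rho>_def prod_dividef)
  have pnz: "prod \<rho> K \<noteq> 0" using \<rho>nz by (simp add: K_def)
  have sgn: "(-1::real)^(k+n) = (-1)^(n-k)"
  proof -
    have "k + n = (n - k) + 2 * k" using k by simp
    then have "(-1::real)^(k+n) = (-1)^(n-k) * ((-1)^2)^k" by (simp only: power_add power_mult)
    then show ?thesis by simp
  qed
  show ?thesis
    unfolding K_def[symmetric] PPn PPS inv using ek Knz pnz sgn
    by (simp add: field_simps)
qed

definition Jt :: "nat \<Rightarrow> real \<Rightarrow> (nat \<Rightarrow> real) set" where
  "Jt n t = {x \<in> PiE {..<n} (\<lambda>_. UNIV).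
            (\<forall>i<n. 0 \<le> x i \<and> x i \<le> t) \<and> (\<forall>i j. i \<le> j \<and> j < n \<longrightarrow> x i \<le> x j)}"

definition pw :: "nat \<Rightarrow> real \<Rightarrow> real \<Rightarrow> real" where
  "pw n t A = (if n = 0 then 1 else t powr A)"

lemma J_eq: "J n = Jt n 1" by (simp add: J_def Jt_def)

lemma comp_meas: "i < n \<Longrightarrow> (\<lambda>x. x i) \<in> borel_measurable (PiM {..<n} (\<lambda>_. lborel :: real measure))"
  using measurable_component_singleton[of i "{..<n}" "\<lambda>_. lborel"] by (simp add: measurable_lborel2)

lemma Jt_sets[measurable]: "Jt n t \<in> sets (PiM {..<n} (\<lambda>_. lborel))"
proof -
  let ?M = "PiM {..<n} (\<lambda>_. lborel :: real measure)"
  have p1: "Measurable.pred ?M (\<lambda>x. i < n \<longrightarrow> 0 \<le> x i \<and> x i \<le> t)" for i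
  proof (cases "i < n")
    case True
    have a: "{w\<in>space ?M. (\<lambda>_. 0) w \<le> (\<lambda>w. w i) w} \<in> sets ?M"
      by (rule borel_measurable_le[OF measurable_const comp_meas[OF True]]) simp
    have b: "{w\<in>space ?M. (\<lambda>w. w i) w \<le> (\<lambda>_. t) w} \<in> sets ?M"
      by (rule borel_measurable_le[OF comp_meas[OF True] measurable_const]) simp
    have "{w\<in>space ?M. i < n \<longrightarrow> 0 \<le> w i \<and> w i \<le> t} = {w\<in>space ?M. (\<lambda>_. 0) w \<le> (\<lambda>w. w i) w} \<inter> {w\<in>space ?M. (\<lambda>w. w i) w \<le> (\<lambda>_. t) w}"
      using True by auto
    then show ?thesis unfolding pred_def by (simp only: sets.Int[OF a b])
  next
    case False
    then show ?thesis unfolding pred_def by simp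
  qed
  have p2: "Measurable.pred ?M (\<lambda>x. i \<le> j \<and> j < n \<longrightarrow> x i \<le> x j)" for i j
  proof (cases "i \<le> j \<and> j < n")
    case True
    have "i < n" "j < n" using True by auto
    have a: "{w\<in>space ?M. (\<lambda>w. w i) w \<le> (\<lambda>w. w j) w} \<in> sets ?M"
      by (rule borel_measurable_le[OF comp_meas[OF \<open>i < n\<close>] comp_meas[OF \<open>j < n\<close>]])
    have e: "(\<lambda>x. i \<le> j \<and> j < n \<longrightarrow> x i \<le> x j) = (\<lambda>x. x i \<le> x j)"
      using True by simp
    show ?thesis unfolding e pred_def using a by simp
  next
    case False
    have e: "(\<lambda>x. i \<le> j \<and> j < n \<longrightarrow> x i \<le> x j) = (\<lambda>x. True)"
      using False by blast
    show ?thesis unfolding e pred_def by simp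
  qed
  have "Measurable.pred ?M (\<lambda>x. (\<forall>i. i < n \<longrightarrow> 0 \<le> x i \<and> x i \<le> t) \<and> (\<forall>i j. i \<le> j \<and> j < n \<longrightarrow> x i \<le> x j))"
    by (intro pred_intros_logic(3) pred_intros_countable p1 p2)
  then have "{x \<in> space ?M. (\<forall>i<n. 0 \<le> x i \<and> x i \<le> t) \<and> (\<forall>i j. i \<le> j \<and> j < n \<longrightarrow> x i \<le> x j)} \<in> sets ?M"
    by (simp only: pred_def)
  also have "{x \<in> space ?M. (\<forall>i<n. 0 \<le> x i \<and> x i \<le> t) \<and> (\<forall>i j. i \<le> j \<and> j < n \<longrightarrow> x i \<le> x j)} = Jt n t"
    by (simp add: Jt_def space_PiM)
  finally show ?thesis .
qed

lemma Jt_insert: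
  assumes "x \<in> space (PiM {..<n} (\<lambda>_. lborel))"
  shows "x(n := y) \<in> Jt (Suc n) t \<longleftrightarrow> y \<in> {0..t} \<and> x \<in> Jt n y"
proof -
  have xE: "x \<in> PiE {..<n} (\<lambda>_. UNIV)" using assms by (simp add: space_PiM)
  have E: "x(n := y) \<in> PiE {..<Suc n} (\<lambda>_. UNIV)" using xE by (auto simp: PiE_def extensional_def)
  show ?thesis
  proof
    assume H: "x(n := y) \<in> Jt (Suc n) t"
    have A: "\<And>i. i < Suc n \<Longrightarrow> 0 \<le> (x(n := y)) i \<and> (x(n := y)) i \<le> t"
      and B: "\<And>i j. i \<le> j \<Longrightarrow> j < Suc n \<Longrightarrow> (x(n := y)) i \<le> (x(n := y)) j"
      using H unfolding Jt_def mem_Collect_eq by blast+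
    have y: "y \<in> {0..t}" using A[of n] by simp
    have C1: "\<forall>i<n. 0 \<le> x i \<and> x i \<le> y"
    proof (intro allI impI)
      fix i assume "i < n"
      then show "0 \<le> x i \<and> x i \<le> y" using A[of i] B[of i n] by simp
    qed
    have C2: "\<forall>i j. i \<le> j \<and> j < n \<longrightarrow> x i \<le> x j"
    proof (intro allI impI)
      fix i j assume "i \<le> j \<and> j < n"
      then show "x i \<le> x j" using B[of i j] by simp
    qed
    show "y \<in> {0..t} \<and> x \<in> Jt n y" using y C1 C2 xE unfolding Jt_def by blast
  next
    assume H: "y \<in> {0..t} \<and> x \<in> Jt n y"
    have y: "0 \<le> y" "y \<le> t" using H by auto
    have A: "\<And>i. i < n \<Longrightarrow> 0 \<le> x i \<and> x i \<le> y"
      and B: "\<And>i j. i \<le> j \<Longrightarrow> j < n \<Longrightarrow> x i \<le> x j"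
      using H unfolding Jt_def mem_Collect_eq by blast+
    have C1: "\<forall>i<Suc n. 0 \<le> (x(n := y)) i \<and> (x(n := y)) i \<le> t"
    proof (intro allI impI)
      fix i assume "i < Suc n"
      then consider "i = n" | "i < n" by linarith
      then show "0 \<le> (x(n := y)) i \<and> (x(n := y)) i \<le> t"
        by cases (use y A[of i] in auto)
    qed
    have C2: "\<forall>i j. i \<le> j \<and> j < Suc n \<longrightarrow> (x(n := y)) i \<le> (x(n := y)) j"
    proof (intro allI impI)
      fix i j assume ij: "i \<le> j \<and> j < Suc n"
      then consider "j = n" "i = n" | "j = n" "i < n" | "j < n" "i < n" by linarith
      then show "(x(n := y)) i \<le> (x(n := y)) j"
        by cases (use A[of i] B[of i j] ij in auto)
    qed
    show "x(n := y) \<in> Jt (Suc n) t" using E C1 C2 unfolding Jt_def by blast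
  qed
qed

lemma integral_insert_rev:
  fixes f :: "_ \<Rightarrow> real"
  assumes I: "finite I" "i \<notin> I" and f: "integrable (PiM (insert i I) (\<lambda>_. lborel)) f"
  shows "integral\<^sup>L (PiM (insert i I) (\<lambda>_. lborel)) f =
         (\<integral>y. (\<integral>x. f (x(i := y)) \<partial>PiM I (\<lambda>_. lborel)) \<partial>lborel)"
proof -
  interpret product_sigma_finite "\<lambda>_. lborel" by standard
  interpret P: pair_sigma_finite "PiM I (\<lambda>_. lborel)" lborel
    by (simp add: pair_sigma_finite.intro sigma_finite_measures local.sigma_finite I)
  have fm[measurable]: "f \<in> borel_measurable (PiM (insert i I) (\<lambda>_. lborel))" using f by auto
  have "integrable (PiM I (\<lambda>_. lborel) \<Otimes>\<^sub>M lborel) (\<lambda>(x, y). f (x(i := y)))"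
  proof (subst integrable_iff_bounded, intro conjI)
    show "(\<lambda>(x, y). f (x(i := y))) \<in> borel_measurable (PiM I (\<lambda>_. lborel) \<Otimes>\<^sub>M lborel)"
      by measurable
    have "(\<integral>\<^sup>+ z. ennreal (norm ((\<lambda>(x, y). f (x(i := y))) z)) \<partial>(PiM I (\<lambda>_. lborel) \<Otimes>\<^sub>M lborel))
        = (\<integral>\<^sup>+ x. \<integral>\<^sup>+ y. ennreal (norm (f (x(i := y)))) \<partial>lborel \<partial>PiM I (\<lambda>_. lborel))"
      using lborel.nn_integral_fst[of "\<lambda>z. ennreal (norm (case z of (x, y) \<Rightarrow> f (x(i := y))))"] by simp
    also have "\<dots> = (\<integral>\<^sup>+ x. ennreal (norm (f x)) \<partial>PiM (insert i I) (\<lambda>_. lborel))"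
      using I by (subst product_nn_integral_insert) auto
    also have "\<dots> < \<infinity>" using f by (simp add: integrable_iff_bounded)
    finally show "(\<integral>\<^sup>+ z. ennreal (norm ((\<lambda>(x, y). f (x(i := y))) z)) \<partial>(PiM I (\<lambda>_. lborel) \<Otimes>\<^sub>M lborel)) < \<infinity>" .
  qed
  then have "(\<integral>y. (\<integral>x. f (x(i := y)) \<partial>PiM I (\<lambda>_. lborel)) \<partial>lborel) =
             (\<integral>x. (\<integral>y. f (x(i := y)) \<partial>lborel) \<partial>PiM I (\<lambda>_. lborel))"
    by (rule P.Fubini_integral)
  then show ?thesis using product_integral_insert[OF I f] by simp
qed

lemma powr_nn:
  fixes c t :: real
  assumes "c > 0" "t \<ge> 0"
  shows "(\<integral>\<^sup>+y. ennreal (indicator {0..t} y * y powr (c - 1)) \<partial>lborel) = ennreal (t powr c / c)"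
proof -
  have "((\<lambda>y. y powr (c - 1)) has_integral (t powr (c - 1 + 1) / (c - 1 + 1))) {0..t}"
    by (rule has_integral_powr_from_0) (use assms in auto)
  then show ?thesis
    by (subst nn_integral_has_integral_lebesgue) auto
qed

lemma powr_int:
  fixes c t :: real
  assumes "c > 0" "t \<ge> 0"
  shows "(\<integral>y. indicator {0..t} y * y powr (c - 1) \<partial>lborel) = t powr c / c"
proof -
  have "(\<integral>y. indicator {0..t} y * y powr (c - 1) \<partial>lborel) =
        enn2real (\<integral>\<^sup>+y. ennreal (indicator {0..t} y * y powr (c - 1)) \<partial>lborel)"
    by (rule integral_eq_nn_integral) (auto simp: indicator_def)
  also have "\<dots> = t powr c / c" using assms by (simp add: powr_nn)
  finally show ?thesis .
qed

lemma meas_mono: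
  fixes a :: "nat \<Rightarrow> real"
  shows "(\<lambda>x. indicator (Jt m t) x * (\<Prod>j<m. x j powr (a j - 1))) \<in> borel_measurable (PiM {..<m} (\<lambda>_. lborel :: real measure))"
proof -
  have "(\<lambda>x. \<Prod>j<m. x j powr (a j - 1)) \<in> borel_measurable (PiM {..<m} (\<lambda>_. lborel :: real measure))"
    by (rule borel_measurable_prod) (auto intro!: powr_real_measurable[OF comp_meas measurable_const])
  then show ?thesis
    by (intro borel_measurable_times borel_measurable_indicator Jt_sets)
qed

lemma mono_nn:
  fixes a :: "nat \<Rightarrow> real"
  assumes "t \<ge> 0" "\<And>i. i < n \<Longrightarrow> a i > 0"
  shows "(\<integral>\<^sup>+x. ennreal (indicator (Jt n t) x * (\<Prod>j<n. x j powr (a j - 1))) \<partial>PiM {..<n} (\<lambda>_. lborel))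
         = ennreal (pw n t (\<Sum>j<n. a j) / (\<Prod>k\<in>{1..n}. \<Sum>j<k. a j))"
  using assms
proof (induction n arbitrary: t)
  case 0
  have "Jt 0 t = {\<lambda>_. undefined}" by (auto simp: Jt_def)
  then show ?case by (simp add: PiM_empty nn_integral_count_space_finite pw_def)
next
  case (Suc n t)
  let ?M = "\<lambda>m. PiM {..<m} (\<lambda>_. lborel :: real measure)"
  define A where "A = (\<Sum>j<n. a j)"
  define S where "S = A + a n"
  define Q where "Q = (\<Prod>k\<in>{1..n}. \<Sum>j<k. a j)"
  have apos: "a i > 0" if "i < Suc n" for i using Suc.prems that by auto
  have A0: "A \<ge> 0" unfolding A_def using apos by (intro sum_nonneg) (auto intro: less_imp_le)
  have S0: "S > 0" unfolding S_def using A0 apos[of n] by simp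
  have Q0: "Q > 0" unfolding Q_def
  proof (intro prod_pos)
    fix k assume "k \<in> {1..n}"
    then have k: "0 < k" "k \<le> n" by auto
    have "a 0 \<le> (\<Sum>j<k. a j)"
      by (rule member_le_sum) (use k apos in \<open>auto intro: less_imp_le\<close>)
    then show "0 < (\<Sum>j<k. a j)" using apos[of 0] by linarith
  qed
  interpret product_sigma_finite "\<lambda>_. lborel :: real measure" by standard
  define F where "F x = ennreal (indicator (Jt (Suc n) t) x * (\<Prod>j<Suc n. x j powr (a j - 1)))" for x
  have Fm: "F \<in> borel_measurable (PiM (insert n {..<n}) (\<lambda>_. lborel :: real measure))"
    unfolding F_def lessThan_Suc[symmetric] by (intro measurable_compose[OF meas_mono] measurable_ennreal)
  have "(\<integral>\<^sup>+x. F x \<partial>?M (Suc n)) = (\<integral>\<^sup>+x. F x \<partial>PiM (insert n {..<n}) (\<lambda>_. lborel))"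
    by (simp add: lessThan_Suc)
  also have "\<dots> = (\<integral>\<^sup>+y. \<integral>\<^sup>+x. F (x(n := y)) \<partial>?M n \<partial>lborel)"
    by (rule product_nn_integral_insert_rev) (auto simp: Fm)
  also have "\<dots> = (\<integral>\<^sup>+y. ennreal (indicator {0..t} y * y powr (a n - 1)) *
       (\<integral>\<^sup>+x. ennreal (indicator (Jt n y) x * (\<Prod>j<n. x j powr (a j - 1))) \<partial>?M n) \<partial>lborel)"
  proof (intro nn_integral_cong)
    fix y :: real
    have "(\<integral>\<^sup>+x. F (x(n := y)) \<partial>?M n) = (\<integral>\<^sup>+x. ennreal (indicator {0..t} y * y powr (a n - 1)) *
       ennreal (indicator (Jt n y) x * (\<Prod>j<n. x j powr (a j - 1))) \<partial>?M n)"
    proof (intro nn_integral_cong)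
      fix x assume x: "x \<in> space (?M n)"
      have pr: "(\<Prod>j<Suc n. (x(n := y)) j powr (a j - 1)) = (\<Prod>j<n. x j powr (a j - 1)) * y powr (a n - 1)"
        by (simp add: prod.lessThan_Suc)
      have ind: "indicator (Jt (Suc n) t) (x(n := y)) = (indicator {0..t} y * indicator (Jt n y) x :: real)"
        using Jt_insert[OF x, of y t] by (auto simp: indicator_def)
      show "F (x(n := y)) = ennreal (indicator {0..t} y * y powr (a n - 1)) *
            ennreal (indicator (Jt n y) x * (\<Prod>j<n. x j powr (a j - 1)))"
        unfolding F_def pr ind
        by (subst ennreal_mult'[symmetric]) (auto intro!: prod_nonneg arg_cong[where f=ennreal])
    qed
    also have "\<dots> = ennreal (indicator {0..t} y * y powr (a n - 1)) *
       (\<integral>\<^sup>+x. ennreal (indicator (Jt n y) x * (\<Prod>j<n. x j powr (a j - 1))) \<partial>?M n)"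
      by (rule nn_integral_cmult) (intro measurable_compose[OF meas_mono] measurable_ennreal)
    finally show "(\<integral>\<^sup>+x. F (x(n := y)) \<partial>?M n) = \<dots>" .
  qed
  also have "\<dots> = (\<integral>\<^sup>+y. ennreal (indicator {0..t} y * y powr (S - 1)) * ennreal (1 / Q) \<partial>lborel)"
  proof (intro nn_integral_cong)
    fix y :: real
    show "ennreal (indicator {0..t} y * y powr (a n - 1)) *
       (\<integral>\<^sup>+x. ennreal (indicator (Jt n y) x * (\<Prod>j<n. x j powr (a j - 1))) \<partial>?M n) =
       ennreal (indicator {0..t} y * y powr (S - 1)) * ennreal (1 / Q)"
    proof (cases "y \<in> {0..t}")
      case True
      have IH: "(\<integral>\<^sup>+x. ennreal (indicator (Jt n y) x * (\<Prod>j<n. x j powr (a j - 1))) \<partial>?M n) =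
          ennreal (pw n y A / Q)"
        unfolding A_def Q_def by (rule Suc.IH) (use True apos in auto)
      have pweq: "y powr (a n - 1) * pw n y A = y powr (S - 1)"
      proof (cases "n = 0")
        case True then show ?thesis by (simp add: pw_def S_def A_def)
      next
        case False then show ?thesis by (simp add: pw_def S_def powr_add[symmetric] algebra_simps)
      qed
      have "y powr (a n - 1) * (pw n y A / Q) = y powr (S - 1) * (1 / Q)"
        using pweq by (simp add: field_simps)
      moreover have "pw n y A \<ge> 0" by (simp add: pw_def)
      ultimately show ?thesis unfolding IH using True Q0
        by (simp add: ennreal_mult'[symmetric] ennreal_mult[symmetric])
    next
      case False
      then show ?thesis by simp
    qed
  qed
  also have "\<dots> = (\<integral>\<^sup>+y. ennreal (indicator {0..t} y * y powr (S - 1)) \<partial>lborel) * ennreal (1 / Q)"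
    by (rule nn_integral_multc) measurable
  also have "\<dots> = ennreal (t powr S / S) * ennreal (1 / Q)"
    using S0 Suc.prems by (simp add: powr_nn)
  also have "\<dots> = ennreal (pw (Suc n) t (\<Sum>j<Suc n. a j) / (\<Prod>k\<in>{1..Suc n}. \<Sum>j<k. a j))"
  proof -
    have "(\<Prod>k\<in>{1..Suc n}. \<Sum>j<k. a j) = Q * S"
      by (simp add: Q_def S_def A_def prod.cl_ivl_Suc sum.lessThan_Suc)
    moreover have "(\<Sum>j<Suc n. a j) = S" by (simp add: S_def A_def)
    ultimately show ?thesis using S0 Q0 Suc.prems
      by (simp add: ennreal_mult[symmetric] pw_def)
  qed
  finally show ?case unfolding F_def .
qed

lemma skip_sum:
  fixes g :: "nat \<Rightarrow> 'a::comm_monoid_add"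
  assumes "k < Suc n"
  shows "(\<Sum>i<n. g (skip k i)) = (\<Sum>i\<in>{..<Suc n}-{k}. g i)"
  by (rule sum.reindex_bij_witness[where i="unskip k" and j="skip k"])
     (use assms in \<open>auto simp: skip_def unskip_def\<close>)

lemma skip_less: "k < Suc n \<Longrightarrow> i < n \<Longrightarrow> skip k i < Suc n"
  by (auto simp: skip_def)

lemma skip_neq: "skip k i \<noteq> k"
  by (auto simp: skip_def)

lemma inj_skip: "inj (skip k)"
  by (auto simp: skip_def inj_on_def split: if_splits)

lemma PP_rec:
  fixes e :: "nat \<Rightarrow> real"
  assumes pos: "\<And>i. i < Suc n \<Longrightarrow> e i > 0" and inj: "inj_on e {..<Suc n}"
  shows "(\<Sum>k<Suc n. (-1)^(k+n) * PP n (\<lambda>i. e (skip k i))) = (\<Sum>i<Suc n. e i) * PP (Suc n) e"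
proof -
  have "(\<Sum>k<Suc n. (-1)^(k+n) * PP n (\<lambda>i. e (skip k i))) =
        (\<Sum>k<Suc n. PP (Suc n) e * (e k * (\<Prod>j\<in>{..<Suc n}-{k}. (e k + e j) / (e k - e j))))"
    by (intro sum.cong refl PP_step[OF pos inj]) auto
  also have "\<dots> = PP (Suc n) e * (\<Sum>k<Suc n. e k * (\<Prod>j\<in>{..<Suc n}-{k}. (e k + e j) / (e k - e j)))"
    by (simp only: sum_distrib_left)
  also have "\<dots> = PP (Suc n) e * (\<Sum>i<Suc n. e i)"
    using lagrange_sum[OF inj] by simp
  finally show ?thesis by simp
qed

lemma mono_int:
  fixes a :: "nat \<Rightarrow> real"
  assumes "t \<ge> 0" "\<And>i. i < n \<Longrightarrow> a i > 0"
  shows "integrable (PiM {..<n} (\<lambda>_. lborel)) (\<lambda>x. indicator (Jt n t) x * (\<Prod>j<n. x j powr (a j - 1)))"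
  by (rule integrableI_nonneg[OF meas_mono]) (auto simp: mono_nn[OF assms] intro!: AE_I2 prod_nonneg mult_nonneg_nonneg)

lemma perm_less: "p permutes {..<n} \<Longrightarrow> i < n \<Longrightarrow> p i < n"
  using permutes_in_image[of p "{..<n}" i] by simp

lemma det_expand:
  "Determinant.det (Matrix.mat n n (\<lambda>(i, j). f i j)) =
     (\<Sum>p\<in>{p. p permutes {..<n}}. signof p * (\<Prod>i<n. f i (p i)))"
proof -
  have "Determinant.det (Matrix.mat n n (\<lambda>(i, j). f i j)) =
     (\<Sum>p\<in>{p. p permutes {0..<n}}. signof p * (\<Prod>i=0..<n. Matrix.mat n n (\<lambda>(i, j). f i j) $$ (i, p i)))"
    unfolding Determinant.det_def by simp
  also have "\<dots> = (\<Sum>p\<in>{p. p permutes {..<n}}. signof p * (\<Prod>i<n. f i (p i)))"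
    unfolding atLeast0LessThan
    by (intro sum.cong refl arg_cong2[where f="(*)"] prod.cong) (auto simp: perm_less)
  finally show ?thesis .
qed

lemma det_int:
  fixes e :: "nat \<Rightarrow> real"
  assumes "t \<ge> 0" "\<And>i. i < n \<Longrightarrow> e i > 0"
  shows "integrable (PiM {..<n} (\<lambda>_. lborel))
           (\<lambda>x. indicator (Jt n t) x * Determinant.det (Matrix.mat n n (\<lambda>(i, j). x j powr (e i - 1))))"
proof -
  have eq: "indicator (Jt n t) x * Determinant.det (Matrix.mat n n (\<lambda>(i, j). x j powr (e i - 1))) =
     (\<Sum>p\<in>{p. p permutes {..<n}}. signof p * (indicator (Jt n t) x * (\<Prod>j<n. x j powr (e (inv_into UNIV p j) - 1))))"
    for x :: "nat \<Rightarrow> real"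
  proof -
    have "(\<Prod>i<n. x (p i) powr (e i - 1)) = (\<Prod>j<n. x j powr (e (inv_into UNIV p j) - 1))"
      if p: "p permutes {..<n}" for p
    proof -
      have "(\<Prod>j<n. x j powr (e (inv_into UNIV p j) - 1)) = (\<Prod>i<n. x (p i) powr (e (inv_into UNIV p (p i)) - 1))"
        by (rule prod.reindex_bij_betw[symmetric]) (rule permutes_imp_bij[OF p])
      also have "\<dots> = (\<Prod>i<n. x (p i) powr (e i - 1))"
        using permutes_inverses(2)[OF p] by simp
      finally show ?thesis by simp
    qed
    then show ?thesis
      unfolding det_expand by (simp add: sum_distrib_left algebra_simps)
  qed
  have pos: "e (inv_into UNIV p i) > 0" if "p permutes {..<n}" "i < n" for p i
  proof -
    from that have "inv_into UNIV p i < n" using permutes_inv perm_less by fastforce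
    then show "e (inv_into UNIV p i) > 0" using assms(2) by blast
  qed
  show ?thesis unfolding eq
    apply (rule Bochner_Integration.integrable_sum)
    apply (rule integrable_mult_right)
    apply (rule mono_int[OF assms(1)])
    using pos by auto
qed

lemma laplace_step:
  fixes e :: "nat \<Rightarrow> real"
  shows "Determinant.det (Matrix.mat (Suc n) (Suc n) (\<lambda>(i, j). (x(n := y)) j powr (e i - 1))) =
    (\<Sum>k<Suc n. y powr (e k - 1) * ((-1)^(k+n) *
        Determinant.det (Matrix.mat n n (\<lambda>(i, j). x j powr (e (skip k i) - 1)))))"
proof -
  define A where "A = Matrix.mat (Suc n) (Suc n) (\<lambda>(i, j). (x(n := y)) j powr (e i - 1))"
  have A: "A \<in> carrier_mat (Suc n) (Suc n)" by (simp add: A_def)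
  have "Determinant.det A = (\<Sum>k<Suc n. A $$ (k, n) * cofactor A k n)"
    by (rule laplace_expansion_column[OF A]) simp
  also have "\<dots> = (\<Sum>k<Suc n. y powr (e k - 1) * ((-1)^(k+n) *
        Determinant.det (Matrix.mat n n (\<lambda>(i, j). x j powr (e (skip k i) - 1)))))"
  proof (intro sum.cong refl)
    fix k assume k: "k \<in> {..<Suc n}"
    have ent: "A $$ (k, n) = y powr (e k - 1)" using k by (simp add: A_def)
    have del: "mat_delete A k n = Matrix.mat n n (\<lambda>(i, j). x j powr (e (skip k i) - 1))"
      by (rule eq_matI) (auto simp: mat_delete_def A_def skip_def)
    show "A $$ (k, n) * cofactor A k n = y powr (e k - 1) * ((-1)^(k+n) *
        Determinant.det (Matrix.mat n n (\<lambda>(i, j). x j powr (e (skip k i) - 1))))"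
      unfolding ent cofactor_def del ..
  qed
  finally show ?thesis by (simp add: A_def)
qed

lemma pw_mult:
  fixes y :: real
  assumes "n = 0 \<Longrightarrow> S = c"
  shows "y powr (c - 1) * pw n y (S - c) = y powr (S - 1)"
proof (cases "n = 0")
  case True then show ?thesis using assms by (simp add: pw_def)
next
  case False then show ?thesis by (simp add: pw_def powr_add[symmetric])
qed

lemma main:
  fixes e :: "nat \<Rightarrow> real"
  assumes "t \<ge> 0" "\<And>i. i < n \<Longrightarrow> e i > 0" "inj_on e {..<n}"
  shows "(\<integral>x. indicator (Jt n t) x * Determinant.det (Matrix.mat n n (\<lambda>(i, j). x j powr (e i - 1)))
            \<partial>PiM {..<n} (\<lambda>_. lborel)) = pw n t (\<Sum>i<n. e i) * PP n e"
  using assms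
proof (induction n arbitrary: t e)
  case 0
  have J0: "Jt 0 t = {\<lambda>_. undefined}" by (auto simp: Jt_def)
  have P0: "{(i, j). i < j \<and> j < (0::nat)} = {}" by auto
  show ?case
    by (simp add: PiM_empty J0 det_expand lebesgue_integral_count_space_finite pw_def PP_def P0)
next
  case (Suc n t e)
  let ?M = "\<lambda>m. PiM {..<m} (\<lambda>_. lborel :: real measure)"
  define S where "S = (\<Sum>i<Suc n. e i)"
  have epos: "e i > 0" if "i < Suc n" for i using Suc.prems that by auto
  have S0: "S > 0" unfolding S_def by (intro sum_pos) (auto intro: epos)
  define D where "D k x = Determinant.det (Matrix.mat n n (\<lambda>(i, j). x j powr (e (skip k i) - 1)))"
    for k and x :: "nat \<Rightarrow> real"
  define G where "G x = indicator (Jt (Suc n) t) x *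
      Determinant.det (Matrix.mat (Suc n) (Suc n) (\<lambda>(i, j). x j powr (e i - 1)))" for x :: "nat \<Rightarrow> real"
  have Gint: "integrable (PiM (insert n {..<n}) (\<lambda>_. lborel)) G"
    unfolding G_def lessThan_Suc[symmetric] by (rule det_int) (use Suc.prems in auto)
  have skpos: "e (skip k i) > 0" if "k < Suc n" "i < n" for k i
    using epos skip_less that by blast
  have skinj: "inj_on (\<lambda>i. e (skip k i)) {..<n}" if "k < Suc n" for k
  proof (rule inj_onI)
    fix i j assume "i \<in> {..<n}" "j \<in> {..<n}" "e (skip k i) = e (skip k j)"
    then have "skip k i = skip k j" using Suc.prems(3) skip_less[OF that] by (auto simp: inj_on_def)
    then show "i = j" using inj_skip by (auto simp: inj_on_def)
  qed
  have sksum: "(\<Sum>i<n. e (skip k i)) = S - e k" if "k < Suc n" for k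
    unfolding skip_sum[OF that] S_def using that by (simp add: sum_diff1)
  have inner: "(\<integral>x. G (x(n := y)) \<partial>?M n) = indicator {0..t} y * y powr (S - 1) * (S * PP (Suc n) e)"
    for y :: real
  proof -
    have "(\<integral>x. G (x(n := y)) \<partial>?M n) = (\<integral>x. indicator {0..t} y *
        (\<Sum>k<Suc n. y powr (e k - 1) * ((-1)^(k+n) * (indicator (Jt n y) x * D k x))) \<partial>?M n)"
    proof (intro Bochner_Integration.integral_cong refl)
      fix x assume x: "x \<in> space (?M n)"
      have ind: "indicator (Jt (Suc n) t) (x(n := y)) = (indicator {0..t} y * indicator (Jt n y) x :: real)"
        using Jt_insert[OF x, of y t] by (auto simp: indicator_def)
      show "G (x(n := y)) = indicator {0..t} y *
        (\<Sum>k<Suc n. y powr (e k - 1) * ((-1)^(k+n) * (indicator (Jt n y) x * D k x)))"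
        unfolding G_def ind laplace_step D_def
        by (simp add: sum_distrib_left algebra_simps)
    qed
    also have "\<dots> = indicator {0..t} y * (\<integral>x.
        (\<Sum>k<Suc n. y powr (e k - 1) * ((-1)^(k+n) * (indicator (Jt n y) x * D k x))) \<partial>?M n)"
      by (rule integral_mult_right_zero)
    also have "\<dots> = indicator {0..t} y * y powr (S - 1) * (S * PP (Suc n) e)"
    proof (cases "y \<in> {0..t}")
      case True
      have y0: "y \<ge> 0" using True by auto
      have Dint: "integrable (?M n) (\<lambda>x. indicator (Jt n y) x * D k x)" if "k < Suc n" for k
        unfolding D_def by (rule det_int[OF y0]) (use skpos that in auto)
      have "(\<integral>x. (\<Sum>k<Suc n. y powr (e k - 1) * ((-1)^(k+n) * (indicator (Jt n y) x * D k x))) \<partial>?M n)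
          = (\<Sum>k<Suc n. y powr (e k - 1) * ((-1)^(k+n) * (\<integral>x. indicator (Jt n y) x * D k x \<partial>?M n)))"
        by (subst Bochner_Integration.integral_sum) (auto intro!: Dint)
      also have "\<dots> = (\<Sum>k<Suc n. y powr (e k - 1) * ((-1)^(k+n) * (pw n y (S - e k) * PP n (\<lambda>i. e (skip k i)))))"
      proof (intro sum.cong refl)
        fix k assume k: "k \<in> {..<Suc n}"
        have "(\<integral>x. indicator (Jt n y) x * D k x \<partial>?M n) = pw n y (\<Sum>i<n. e (skip k i)) * PP n (\<lambda>i. e (skip k i))"
          unfolding D_def by (rule Suc.IH[OF y0]) (use skpos skinj k in auto)
        then show "y powr (e k - 1) * ((-1)^(k+n) * (\<integral>x. indicator (Jt n y) x * D k x \<partial>?M n)) =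
            y powr (e k - 1) * ((-1)^(k+n) * (pw n y (S - e k) * PP n (\<lambda>i. e (skip k i))))"
          using sksum k by simp
      qed
      also have "\<dots> = (\<Sum>k<Suc n. y powr (S - 1) * ((-1)^(k+n) * PP n (\<lambda>i. e (skip k i))))"
      proof (intro sum.cong refl)
        fix k assume k: "k \<in> {..<Suc n}"
        have "n = 0 \<Longrightarrow> S = e k" using k by (simp add: S_def)
        then have "y powr (e k - 1) * pw n y (S - e k) = y powr (S - 1)" by (rule pw_mult)
        then show "y powr (e k - 1) * ((-1)^(k+n) * (pw n y (S - e k) * PP n (\<lambda>i. e (skip k i)))) =
            y powr (S - 1) * ((-1)^(k+n) * PP n (\<lambda>i. e (skip k i)))"
          by (metis (no_types, lifting) mult.assoc mult.left_commute)
      qed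
      also have "\<dots> = y powr (S - 1) * (S * PP (Suc n) e)"
        unfolding sum_distrib_left[symmetric] S_def using PP_rec[OF epos Suc.prems(3)] by simp
      finally show ?thesis using True by simp
    next
      case False
      then show ?thesis by simp
    qed
    finally show ?thesis .
  qed
  have "(\<integral>x. indicator (Jt (Suc n) t) x * Determinant.det (Matrix.mat (Suc n) (Suc n) (\<lambda>(i, j). x j powr (e i - 1)))
            \<partial>?M (Suc n)) = integral\<^sup>L (PiM (insert n {..<n}) (\<lambda>_. lborel)) G"
    unfolding G_def[abs_def] lessThan_Suc ..
  also have "\<dots> = (\<integral>y. (\<integral>x. G (x(n := y)) \<partial>?M n) \<partial>lborel)"
    by (rule integral_insert_rev[OF _ _ Gint]) auto
  also have "\<dots> = (\<integral>y. indicator {0..t} y * y powr (S - 1) \<partial>lborel) * (S * PP (Suc n) e)"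
    unfolding inner by (rule integral_mult_left_zero)
  also have "\<dots> = t powr S / S * (S * PP (Suc n) e)"
    using powr_int[OF S0 Suc.prems(1)] by simp
  also have "\<dots> = pw (Suc n) t (\<Sum>i<Suc n. e i) * PP (Suc n) e"
    using S0 by (simp add: pw_def S_def)
  finally show ?case .
qed

theorem proposition2p2p2:
  fixes n :: nat and e :: "nat \<Rightarrow> real"
  assumes "\<And>i. i < n \<Longrightarrow> e i > 0"
  shows "(LINT x : J n | (\<Pi>\<^sub>M i\<in>{..<n}. lborel).
            Determinant.det (Matrix.mat n n (\<lambda>(i, j). x j powr (e i - 1))))
         = (1 / (\<Prod>i<n. e i)) *
           (\<Prod>(i, j) \<in> {(i, j). i < j \<and> j < n}. (e j - e i) / (e j + e i))"
proof (cases "inj_on e {..<n}")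
  case True
  have "(LINT x : J n | (\<Pi>\<^sub>M i\<in>{..<n}. lborel).
            Determinant.det (Matrix.mat n n (\<lambda>(i, j). x j powr (e i - 1)))) =
        (\<integral>x. indicator (Jt n 1) x * Determinant.det (Matrix.mat n n (\<lambda>(i, j). x j powr (e i - 1)))
            \<partial>PiM {..<n} (\<lambda>_. lborel))"
    by (simp add: set_lebesgue_integral_def J_eq)
  also have "\<dots> = pw n 1 (\<Sum>i<n. e i) * PP n e"
    by (rule main) (use assms True in auto)
  also have "\<dots> = (1 / (\<Prod>i<n. e i)) *
           (\<Prod>(i, j) \<in> {(i, j). i < j \<and> j < n}. (e j - e i) / (e j + e i))"
    by (simp add: pw_def PP_def)
  finally show ?thesis .
next
  case False
  then obtain a b where ab: "a < n" "b < n" "a \<noteq> b" "e a = e b"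
    by (auto simp: inj_on_def)
  define a' where "a' = min a b"
  define b' where "b' = max a b"
  have ab': "a' < b'" "b' < n" "e a' = e b'" using ab by (auto simp: a'_def b'_def min_def max_def)
  have det0: "Determinant.det (Matrix.mat n n (\<lambda>(i, j). x j powr (e i - 1))) = 0" for x :: "nat \<Rightarrow> real"
  proof (rule det_identical_rows[of _ n a b])
    show "row (Matrix.mat n n (\<lambda>(i, j). x j powr (e i - 1))) a = row (Matrix.mat n n (\<lambda>(i, j). x j powr (e i - 1))) b"
      by (rule eq_vecI) (use ab in auto)
  qed (use ab in auto)
  have lhs: "(LINT x : J n | (\<Pi>\<^sub>M i\<in>{..<n}. lborel).
            Determinant.det (Matrix.mat n n (\<lambda>(i, j). x j powr (e i - 1)))) = 0"
    by (simp add: det0)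
  have "(\<Prod>(i, j) \<in> {(i, j). i < j \<and> j < n}. (e j - e i) / (e j + e i)) = 0"
  proof (rule prod_zero)
    show "finite {(i, j). i < j \<and> j < n}" by (rule fin_pairs)
    show "\<exists>z\<in>{(i, j). i < j \<and> j < n}. (case z of (i, j) \<Rightarrow> (e j - e i) / (e j + e i)) = 0"
      by (rule bexI[of _ "(a', b')"]) (use ab' in auto)
  qed
  then show ?thesis using lhs by simp
qed

end
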